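(* Let $F$ be any probability distribution on $[0,\infty)\times\{1,2,3,\dots\}$. Then there exists a sequence of $\mathrm{MMPH}^\ast$ distributions (as defined in the context) that converges weakly to $F$.
   Context: A sub-intensity matrix of dimension $p$ is a $p\times p$ real matrix $\mathbf{T}=(t_{ij})$ with $t_{ij}\ge 0$ for $i\neq j$, nonpositive row sums, and such that $\mathbf{T}$ is nonsingular; its exit vector is $\mathbf{t}=-\mathbf{T}\mathbf{e}$, where $\mathbf{e}$ is the column vector of ones. Let $\{X_t\}_{t\ge0}$ be a time-homogeneous Markov jump process on $\{1,\dots,p,p+1\}$ in which $1,\dots,p$ are transient and $p+1$ is absorbing, with generator $\begin{pmatrix}\mathbf{T}&\mathbf{t}\\ \mathbf{0}&0\end{pmatrix}$ and initial distribution $\boldsymbol{\alpha}$ (a probability row vector on $\{1,\dots,p\}$). Let $Y=\inf\{t>0: X_t=p+1\}$ be the absorption time. Partition $\{1,\dots,p\}$ into disjoint sets $E^+$ and $E^0$, and assume that $\boldsymbol{\alpha}$ is supported on $E^+$ (i.e. $\alpha_i=0$ for $i\in E^0$). Let $Z_0,Z_1,\dots$ be the embedded (jump) chain of $X$ (so $Z_0=X_0$ and $Z_k$ is the state entered at the $k$-th jump); let $N$ be the number of indices $k\ge0$ before absorption with $Z_k\in E^+$, i.e. the number of visits (including the initial one) of $X$ to states of $E^+$ before absorption; under the assumption on $\boldsymbol{\alpha}$, $N\ge1$. The distribution of $(Y,N)$ on $[0,\infty)\times\{1,2,\dots\}$ is called the $\mathrm{MMPH}^\ast$ distribution with parameters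 $(\boldsymbol{\alpha},\mathbf{T},E^+)$; the $\mathrm{MMPH}^\ast$ class consists of all such distributions, for all $p\ge1$, all sub-intensity matrices $\mathbf{T}$, all partitions and all such $\boldsymbol{\alpha}$. Weak convergence refers to probability measures on $[0,\infty)\times\{1,2,\dots\}$ with the product of the usual and the discrete topology. *)

theory Defs
  imports "HOL-Probability.Probability" "Jordan_Normal_Form.Determinant"
begin

text \<open>States are indexed 0,...,p-1 (transient) and p (absorbing).
  T is a p x p real matrix, alpha a real vector of dimension p,
  Eplus a subset of the transient states.\<close>

definition sub_intensity_matrix :: "nat \<Rightarrow> real mat \<Rightarrow> bool" where
  "sub_intensity_matrix p T \<longleftrightarrow>
     T \<in> carrier_mat p p \<and>
     (\<forall>i<p. \<forall>j<p. i \<noteq> j \<longrightarrow> T $$ (i,j) \<ge> 0) \<and>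
     (\<forall>i<p. (\<Sum>j<p. T $$ (i,j)) \<le> 0) \<and>
     invertible_mat T"

definition exit_rate :: "nat \<Rightarrow> real mat \<Rightarrow> nat \<Rightarrow> real" where
  "exit_rate p T i = - (\<Sum>j<p. T $$ (i,j))"

definition jump_rate :: "real mat \<Rightarrow> nat \<Rightarrow> real" where
  "jump_rate T i = - T $$ (i,i)"

definition jump_prob :: "nat \<Rightarrow> real mat \<Rightarrow> nat \<Rightarrow> nat \<Rightarrow> real" where
  "jump_prob p T i j =
     (if i < p then
        (if j < p then (if i = j then 0 else T $$ (i,j) / jump_rate T i)
         else if j = p then exit_rate p T i / jump_rate T i else 0)
      else if i = p then (if j = p then 1 else 0) else 0)"

text \<open>Holding-time law in state i: exponential with rate jump_rate T i
  for transient i; degenerate at 0 in the absorbing state (irrelevant).\<close>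
definition holding_prob :: "nat \<Rightarrow> real mat \<Rightarrow> nat \<Rightarrow> real set \<Rightarrow> real" where
  "holding_prob p T i B =
     (if i < p then measure (density lborel (exponential_density (jump_rate T i))) B
      else indicator B 0)"

text \<open>Jump chain / holding time description of the Markov jump process with
  generator [[T, t],[0, 0]] and initial distribution alpha: Z k is the state
  entered at the k-th jump (Z 0 = X 0) and S k the holding time in Z k.\<close>
definition markov_jump_process ::
  "'w measure \<Rightarrow> (nat \<Rightarrow> 'w \<Rightarrow> nat) \<Rightarrow> (nat \<Rightarrow> 'w \<Rightarrow> real) \<Rightarrow>
   nat \<Rightarrow> real mat \<Rightarrow> real vec \<Rightarrow> bool" where
  "markov_jump_process M Z S p T \<alpha> \<longleftrightarrow>
     prob_space M \<and>
     (\<forall>k. Z k \<in> measurable M (count_space UNIV)) \<and>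
     (\<forall>k. S k \<in> borel_measurable M) \<and>
     (\<forall>(n::nat) (z::nat \<Rightarrow> nat) (B::nat \<Rightarrow> real set).
        (\<forall>k\<le>n. B k \<in> sets borel) \<longrightarrow>
        measure M {\<omega> \<in> space M. \<forall>k\<le>n. Z k \<omega> = z k \<and> S k \<omega> \<in> B k}
        = (if z 0 < p then \<alpha> $ (z 0) else 0)
          * (\<Prod>k<n. jump_prob p T (z k) (z (Suc k)))
          * (\<Prod>k\<le>n. holding_prob p T (z k) (B k)))"

definition absorption_index :: "nat \<Rightarrow> (nat \<Rightarrow> 'w \<Rightarrow> nat) \<Rightarrow> 'w \<Rightarrow> nat" where
  "absorption_index p Z \<omega> = (LEAST k. Z k \<omega> = p)"

definition absorption_time ::
  "nat \<Rightarrow> (nat \<Rightarrow> 'w \<Rightarrow> nat) \<Rightarrow> (nat \<Rightarrow> 'w \<Rightarrow> real) \<Rightarrow> 'w \<Rightarrow> real" where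
  "absorption_time p Z S \<omega> = (\<Sum>k < absorption_index p Z \<omega>. S k \<omega>)"

definition visits_count ::
  "nat \<Rightarrow> (nat \<Rightarrow> 'w \<Rightarrow> nat) \<Rightarrow> nat set \<Rightarrow> 'w \<Rightarrow> nat" where
  "visits_count p Z Eplus \<omega> = card {k. k < absorption_index p Z \<omega> \<and> Z k \<omega> \<in> Eplus}"

definition MMPH_star :: "(real \<times> nat) measure \<Rightarrow> bool" where
  "MMPH_star F \<longleftrightarrow>
     (\<exists>(p::nat) (T::real mat) (\<alpha>::real vec) (Eplus::nat set)
        (M::((nat \<Rightarrow> nat) \<times> (nat \<Rightarrow> real)) measure) Z S.
        0 < p \<and> sub_intensity_matrix p T \<and>
        \<alpha> \<in> carrier_vec p \<and> (\<forall>i<p. \<alpha> $ i \<ge> 0) \<and> (\<Sum>i<p. \<alpha> $ i) = 1 \<and>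
        Eplus \<subseteq> {..<p} \<and> (\<forall>i<p. i \<notin> Eplus \<longrightarrow> \<alpha> $ i = 0) \<and>
        markov_jump_process M Z S p T \<alpha> \<and>
        F = distr M borel (\<lambda>\<omega>. (absorption_time p Z S \<omega>, visits_count p Z Eplus \<omega>)))"

text \<open>Weak convergence of probability measures on R x N (product of the usual and
  the discrete topology): convergence of integrals of bounded continuous functions.\<close>
definition weak_conv_prod :: "(nat \<Rightarrow> (real \<times> nat) measure) \<Rightarrow> (real \<times> nat) measure \<Rightarrow> bool" where
  "weak_conv_prod \<mu> F \<longleftrightarrow>
     (\<forall>f :: real \<times> nat \<Rightarrow> real. continuous_on UNIV f \<and> bounded (range f) \<longrightarrow>
        (\<lambda>n. integral\<^sup>L (\<mu> n) f) \<longlonglongrightarrow> integral\<^sup>L F f)"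

end

theory Submission imports Defs begin

definition pp :: "nat \<Rightarrow> nat" where "pp m = m*m*m*m"
definition aval :: "nat \<Rightarrow> nat \<Rightarrow> real" where "aval m c = real (c div m + 1) / real m"
definition nval :: "nat \<Rightarrow> nat \<Rightarrow> nat" where "nval m c = c mod m + 1"
definition rt :: "nat \<Rightarrow> nat \<Rightarrow> real" where "rt m c = real m / aval m c"
definition Tm :: "nat \<Rightarrow> real mat" where
  "Tm m = mat (pp m) (pp m) (\<lambda>(i,j). if i = j then - rt m (i div m)
      else if j = Suc i \<and> Suc (i mod m) < m then rt m (i div m) else 0)"
definition nxt :: "nat \<Rightarrow> nat \<Rightarrow> nat" where
  "nxt m s = (if s < pp m \<and> Suc (s mod m) < m then Suc s else pp m)"

lemma rt_pos: "0 < m \<Longrightarrow> 0 < rt m c"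
  by (simp add: rt_def aval_def)

lemma rt_nz: "0 < m \<Longrightarrow> rt m c \<noteq> 0"
  using rt_pos[of m c] by linarith

lemma Tm_entry: "i < pp m \<Longrightarrow> j < pp m \<Longrightarrow> Tm m $$ (i,j) = (if i = j then - rt m (i div m)
      else if j = Suc i \<and> Suc (i mod m) < m then rt m (i div m) else 0)"
  by (simp add: Tm_def)

lemma Suc_lt_pp: assumes "0 < m" "s < pp m" "Suc (s mod m) < m" shows "Suc s < pp m"
proof -
  have "pp m = m * (m*m*m)" by (simp add: pp_def mult.assoc)
  then have "s div m < m*m*m" using assms by (metis div_less_iff_less_mult mult.commute)
  have "s = s div m * m + s mod m" by simp
  then have "Suc s = s div m * m + Suc (s mod m)" by simp
  also have "... < s div m * m + m" using assms(3) by linarith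
  also have "... = (s div m + 1) * m" by simp
  also have "... \<le> (m*m*m) * m" using \<open>s div m < m*m*m\<close> by (intro mult_right_mono) auto
  finally show ?thesis by (simp add: pp_def)
qed

lemma row_sum_Tm: assumes m: "0 < m" and s: "s < pp m"
  shows "(\<Sum>j<pp m. Tm m $$ (s,j)) = - rt m (s div m) + (if Suc (s mod m) < m then rt m (s div m) else 0)"
proof -
  have "(\<Sum>j<pp m. Tm m $$ (s,j)) = (\<Sum>j<pp m. (if j = s then - rt m (s div m) else 0)
          + (if j = Suc s \<and> Suc (s mod m) < m then rt m (s div m) else 0))"
    by (intro sum.cong) (auto simp: Tm_entry s)
  also have "... = - rt m (s div m) + (if Suc (s mod m) < m then rt m (s div m) else 0)"
    using s Suc_lt_pp[OF m s] by (simp add: sum.distrib)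
  finally show ?thesis .
qed

lemma exit_rate_Tm: "0 < m \<Longrightarrow> s < pp m \<Longrightarrow> exit_rate (pp m) (Tm m) s = (if Suc (s mod m) < m then 0 else rt m (s div m))"
  by (simp add: exit_rate_def row_sum_Tm)

lemma jump_rate_Tm: "s < pp m \<Longrightarrow> jump_rate (Tm m) s = rt m (s div m)"
  by (simp add: jump_rate_def Tm_entry)

lemma jump_prob_Tm: assumes m: "0 < m" and s: "s \<le> pp m"
  shows "jump_prob (pp m) (Tm m) s j = (if j = nxt m s then 1 else 0)"
proof (cases "s < pp m")
  case True
  have r: "rt m (s div m) > 0" using rt_pos m by auto
  show ?thesis
    using True r Suc_lt_pp[OF m True]
    by (auto simp: jump_prob_def nxt_def jump_rate_Tm Tm_entry exit_rate_Tm[OF m True])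
next
  case False
  then show ?thesis using s by (auto simp: jump_prob_def nxt_def)
qed

lemma sub_intensity_Tm: assumes m: "0 < m" shows "sub_intensity_matrix (pp m) (Tm m)"
proof -
  have car: "Tm m \<in> carrier_mat (pp m) (pp m)" by (simp add: Tm_def)
  have ut: "upper_triangular (Tm m)" by (auto simp: upper_triangular_def Tm_def)
  have "det (Tm m) = prod_list (diag_mat (Tm m))" by (rule det_upper_triangular[OF ut car])
  also have "... \<noteq> 0"
    using rt_nz[OF m] by (auto simp: diag_mat_def Tm_def prod_list_zero_iff)
  finally have d: "det (Tm m) \<noteq> 0" .
  have "Tm m \<in> Units (ring_mat TYPE(real) (pp m) ())" by (rule det_non_zero_imp_unit[OF car d])
  then obtain B where B: "B \<in> carrier_mat (pp m) (pp m)" "B * Tm m = 1\<^sub>m (pp m)" "Tm m * B = 1\<^sub>m (pp m)"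
    by (auto simp: Units_def ring_mat_def)
  have inv: "invertible_mat (Tm m)"
    unfolding invertible_mat_def inverts_mat_def using B car by (auto simp: square_mat.simps)
  have rs: "(\<Sum>j<pp m. Tm m $$ (i,j)) \<le> 0" if "i < pp m" for i
    using rt_pos[OF m, of "i div m"] by (simp add: row_sum_Tm[OF m that])
  show ?thesis unfolding sub_intensity_matrix_def
    using car inv rt_pos[OF m] rs by (auto simp: Tm_entry less_imp_le)
qed

definition zpath :: "nat \<Rightarrow> nat \<Rightarrow> nat \<Rightarrow> nat" where
  "zpath m c k = (if k < m then c*m + k else pp m)"

lemma cm_lt_pp: assumes "c < m*m*m" "k < m" shows "c*m + k < pp m"
proof -
  have "c*m + k < c*m + m" using assms by simp
  also have "... = (c+1)*m" by simp
  also have "... \<le> (m*m*m)*m" using assms by (intro mult_right_mono) auto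
  finally show ?thesis by (simp add: pp_def)
qed

lemma zpath_le: "c < m*m*m \<Longrightarrow> zpath m c k \<le> pp m"
  using cm_lt_pp[of c m k] by (auto simp: zpath_def)

lemma nxt_zpath: assumes m: "0 < m" and c: "c < m*m*m"
  shows "nxt m (zpath m c k) = zpath m c (Suc k)"
proof (cases "k < m")
  case True
  have lt: "c*m + k < pp m" using cm_lt_pp[OF c True] .
  have md: "(c*m + k) mod m = k" using True by simp
  show ?thesis using True lt md by (auto simp: zpath_def nxt_def)
next
  case False
  then show ?thesis by (auto simp: zpath_def nxt_def)
qed

lemma prod_jp: assumes m: "0 < m" and c: "c < m*m*m" and z0: "z 0 = c*m"
  shows "(\<Prod>k<n. jump_prob (pp m) (Tm m) (z k) (z (Suc k))) = (if \<forall>k\<le>n. z k = zpath m c k then 1 else 0)"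
proof (induction n)
  case 0
  then show ?case using z0 m by (simp add: zpath_def)
next
  case (Suc n)
  show ?case
  proof (cases "\<forall>k\<le>n. z k = zpath m c k")
    case True
    then have zn: "z n = zpath m c n" by simp
    have "jump_prob (pp m) (Tm m) (z n) (z (Suc n)) = (if z (Suc n) = zpath m c (Suc n) then 1 else 0)"
      unfolding zn by (simp add: jump_prob_Tm[OF m zpath_le[OF c]] nxt_zpath[OF m c])
    moreover have "(\<forall>k\<le>Suc n. z k = zpath m c k) \<longleftrightarrow> z (Suc n) = zpath m c (Suc n)"
      using True le_Suc_eq by auto
    ultimately show ?thesis using Suc True by simp
  next
    case False
    then show ?thesis using Suc by auto
  qed
qed

definition Sig :: "((nat \<Rightarrow> nat) \<times> (nat \<Rightarrow> real)) measure" where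
  "Sig = PiM UNIV (\<lambda>_. count_space UNIV) \<Otimes>\<^sub>M PiM UNIV (\<lambda>_. borel)"

definition H :: "nat \<Rightarrow> nat \<Rightarrow> nat \<Rightarrow> real measure" where
  "H m c k = (if k < m then density lborel (exponential_density (rt m c)) else return borel 0)"

lemma prob_space_H: "0 < m \<Longrightarrow> prob_space (H m c k)"
  by (auto simp: H_def rt_pos intro!: prob_space_exponential_density prob_space_return)

lemma sets_H[measurable_cong]: "sets (H m c k) = sets borel"
  by (simp add: H_def)

lemma space_H: "space (H m c k) = UNIV"
  by (simp add: H_def)

definition Mc :: "nat \<Rightarrow> nat \<Rightarrow> ((nat \<Rightarrow> nat) \<times> (nat \<Rightarrow> real)) measure" where
  "Mc m c = distr (PiM UNIV (H m c)) Sig (\<lambda>h. (zpath m c, h))"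

lemma sets_PiM_H: "sets (PiM UNIV (H m c)) = sets (PiM UNIV (\<lambda>_. borel))"
  by (intro sets_PiM_cong) (auto simp: sets_H)

lemma space_PiM_H: "space (PiM UNIV (H m c)) = UNIV"
  by (simp add: space_PiM space_H)

lemma meas_pair_zpath: "(\<lambda>h. (zpath m c, h)) \<in> measurable (PiM UNIV (H m c)) Sig"
  unfolding Sig_def
  by (rule measurable_Pair) (auto simp: measurable_cong_sets[OF sets_PiM_H refl] space_PiM)

lemma prob_space_Mc: "0 < m \<Longrightarrow> prob_space (Mc m c)"
  unfolding Mc_def
  by (intro prob_space.prob_space_distr prob_space_PiM prob_space_H meas_pair_zpath) auto

lemma sets_Mc: "sets (Mc m c) = sets Sig"
  by (simp add: Mc_def)

lemma Mc_in_space: "0 < m \<Longrightarrow> Mc m c \<in> space (subprob_algebra Sig)"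
  using prob_space_Mc[of m c] sets_Mc[of m c]
  by (auto simp: space_subprob_algebra prob_space_imp_subprob_space)

definition Ev :: "nat \<Rightarrow> (nat \<Rightarrow> nat) \<Rightarrow> (nat \<Rightarrow> real set) \<Rightarrow> ((nat \<Rightarrow> nat) \<times> (nat \<Rightarrow> real)) set" where
  "Ev n z B = {\<omega> \<in> space Sig. \<forall>k\<le>n. fst \<omega> k = z k \<and> snd \<omega> k \<in> B k}"

lemma space_Sig: "space Sig = UNIV"
  by (simp add: Sig_def space_pair_measure space_PiM)

lemma Ev_sets: assumes "\<forall>k\<le>n. B k \<in> sets borel" shows "Ev n z B \<in> sets Sig"
proof -
  have "Ev n z B = (\<Inter>k\<in>{..n}. {\<omega> \<in> space Sig. fst \<omega> k = z k \<and> snd \<omega> k \<in> B k})"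
    by (auto simp: Ev_def space_Sig)
  also have "... \<in> sets Sig"
  proof (intro sets.finite_INT)
    fix k assume k: "k \<in> {..n}"
    have [measurable]: "B k \<in> sets borel" using assms k by auto
    show "{\<omega> \<in> space Sig. fst \<omega> k = z k \<and> snd \<omega> k \<in> B k} \<in> sets Sig"
      unfolding Sig_def by measurable
  qed auto
  finally show ?thesis .
qed

lemma measure_Mc_Ev: assumes m: "0 < m" and B: "\<forall>k\<le>n. B k \<in> sets borel"
  shows "measure (Mc m c) (Ev n z B) = (if \<forall>k\<le>n. zpath m c k = z k then (\<Prod>k\<le>n. measure (H m c k) (B k)) else 0)"
proof -
  interpret HH: prob_space "H m c i" for i using prob_space_H[OF m] .
  interpret P: product_prob_space "H m c" UNIV
    by unfold_locales
  have "measure (Mc m c) (Ev n z B) = measure (PiM UNIV (H m c)) ((\<lambda>h. (zpath m c, h)) -` Ev n z B \<inter> space (PiM UNIV (H m c)))"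
    unfolding Mc_def by (rule measure_distr[OF meas_pair_zpath Ev_sets[OF B]])
  also have "... = (if \<forall>k\<le>n. zpath m c k = z k then (\<Prod>k\<le>n. measure (H m c k) (B k)) else 0)"
  proof (cases "\<forall>k\<le>n. zpath m c k = z k")
    case True
    have "(\<lambda>h. (zpath m c, h)) -` Ev n z B \<inter> space (PiM UNIV (H m c)) = {x\<in>space (PiM UNIV (H m c)). \<forall>i\<in>{..n}. x i \<in> B i}"
      using True by (auto simp: Ev_def space_Sig)
    moreover have "emeasure (PiM UNIV (H m c)) {x\<in>space (PiM UNIV (H m c)). \<forall>i\<in>{..n}. x i \<in> B i} = (\<Prod>i\<in>{..n}. emeasure (H m c i) (B i))"
      using B by (intro P.emeasure_PiM_Collect) (auto simp: sets_H)
    moreover have "(\<Prod>i\<in>{..n}. emeasure (H m c i) (B i)) = ennreal (\<Prod>i\<in>{..n}. measure (H m c i) (B i))"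
      by (simp add: HH.emeasure_eq_measure prod_ennreal)
    ultimately show ?thesis using True
      by (simp add: measure_def prod_nonneg)
  next
    case False
    then have "(\<lambda>h. (zpath m c, h)) -` Ev n z B \<inter> space (PiM UNIV (H m c)) = {}"
      by (auto simp: Ev_def)
    then show ?thesis using False by (simp only: measure_empty if_False)
  qed
  finally show ?thesis .
qed

lemma erl_bound:
  fixes g :: "real \<Rightarrow> real"
  assumes a: "0 < a" and gm: "g \<in> borel_measurable borel" and gB: "\<And>y. \<bar>g y\<bar> \<le> B"
    and d: "0 < d" and e: "0 \<le> e" and cont: "\<And>y. \<bar>y - x\<bar> < d \<Longrightarrow> \<bar>g y - g x\<bar> \<le> e"
    and ax: "\<bar>a - x\<bar> < d/2"
  shows "\<bar>(\<integral>y. g y \<partial>density lborel (erlang_density k (real (Suc k) / a))) - g x\<bar>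
          \<le> e + 2 * B * (a\<^sup>2 / (real (Suc k) * (d/2)\<^sup>2))"
proof -
  define l where "l = real (Suc k) / a"
  have l: "0 < l" using a by (simp add: l_def)
  define P where "P = density lborel (erlang_density k l)"
  interpret prob_space P unfolding P_def by (rule prob_space_erlang_density[OF l])
  have spP: "space P = UNIV" by (simp add: P_def)
  have D: "distributed P lborel (\<lambda>y. y) (erlang_density k l)"
    unfolding distributed_def P_def
    by (auto simp: distr_id2)
  have E1': "expectation (\<lambda>y. y) = fact (k+1) / (fact k * l)"
    using erlang_ith_moment[OF l D, of 1] by simp
  have fk: "(fact k :: real) > 0" by simp
  have "(fact (k+1) :: real) / (fact k * l) = (real (Suc k) * fact k) / (fact k * (real (Suc k) / a))"
    by (simp add: l_def fact_Suc del: of_nat_Suc)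
  also have "... = a"
  proof -
    have p: "(fact k + fact k * real k::real) \<noteq> 0" using fk by (smt (verit) of_nat_0_le_iff mult_nonneg_nonneg)
    have q: "a * fact k + a * (fact k * real k) = a * (fact k + fact k * real k)" by (simp add: algebra_simps)
    show ?thesis using p a q by (simp add: field_simps)
  qed
  finally have E1: "expectation (\<lambda>y. y) = a" using E1' by simp
  have V0: "variance (\<lambda>y. y) = real (k + 1) / l\<^sup>2"
    by (rule erlang_distributed_variance[OF l D])
  have "real (k + 1) / l\<^sup>2 = a\<^sup>2 / real (Suc k)"
  proof -
    have k1: "real (Suc k) \<noteq> 0" by simp
    have "real (k + 1) / l\<^sup>2 = real (Suc k) / ((real (Suc k))\<^sup>2 / a\<^sup>2)"
      by (simp add: l_def power_divide)
    also have "... = a\<^sup>2 / real (Suc k)" using k1 a by (simp add: power2_eq_square divide_simps)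
    finally show ?thesis .
  qed
  with V0 have V: "variance (\<lambda>y. y) = a\<^sup>2 / real (Suc k)" by simp
  have sq: "integrable P (\<lambda>y. y ^ 2)"
    using erlang_ith_moment_integrable[OF l D, of 2] .
  define A where "A = {y \<in> space P. d/2 \<le> \<bar>y - expectation (\<lambda>y. y)\<bar>}"
  have cheb: "prob A \<le> variance (\<lambda>y. y) / (d/2)\<^sup>2"
    unfolding A_def
  proof (rule Chebyshev_inequality)
    show "integrable P (\<lambda>x. x ^ 2)" by (rule sq)
  qed (auto simp: P_def d)
  have B0: "0 \<le> B" using gB[of 0] by linarith
  have mA: "A \<in> sets P" unfolding A_def P_def by measurable
  have ig: "integrable P g"
    by (rule integrable_const_bound[where B=B]) (auto simp: gB P_def gm)
  have "(\<integral>y. g y \<partial>P) - g x = (\<integral>y. (g y - g x) \<partial>P)"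
    using ig by (simp add: prob_space)
  also have "\<bar>...\<bar> \<le> (\<integral>y. (e + 2 * B * indicator A y) \<partial>P)"
  proof (rule integral_abs_bound_integral)
    show "integrable P (\<lambda>y. g y - g x)" using ig by simp
    show "integrable P (\<lambda>y. e + 2 * B * indicator A y)"
      using mA by (auto intro!: Bochner_Integration.integrable_add integrable_mult_right integrable_real_indicator simp: emeasure_eq_measure)
    fix y assume "y \<in> space P"
    show "\<bar>g y - g x\<bar> \<le> e + 2 * B * indicator A y"
    proof (cases "y \<in> A")
      case True
      have "\<bar>g y - g x\<bar> \<le> 2 * B" using gB[of y] gB[of x] by linarith
      then show ?thesis using True e by simp
    next
      case False
      then have "\<bar>y - a\<bar> < d/2" using spP E1 by (auto simp: A_def)
      then have "\<bar>y - x\<bar> < d" using ax by linarith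
      then show ?thesis using cont False by simp
    qed
  qed
  also have "... = e + 2 * B * prob A"
    using mA by (simp add: prob_space emeasure_eq_measure integrable_real_indicator)
  also have "... \<le> e + 2 * B * (a\<^sup>2 / (real (Suc k) * (d/2)\<^sup>2))"
    using cheb V B0 by (intro add_left_mono mult_left_mono) (auto simp: field_simps)
  finally show ?thesis by (simp add: P_def l_def)
qed

lemma erl_conv:
  fixes g :: "real \<Rightarrow> real" and a :: "nat \<Rightarrow> real"
  assumes gm: "g \<in> borel_measurable borel" and gB: "\<And>y. \<bar>g y\<bar> \<le> B"
    and cont: "isCont g x" and apos: "\<And>k. 0 < a k" and alim: "a \<longlonglongrightarrow> x"
  shows "(\<lambda>k. \<integral>y. g y \<partial>density lborel (erlang_density k (real (Suc k) / a k))) \<longlonglongrightarrow> g x"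
proof (rule tendstoI)
  fix \<epsilon> :: real assume \<epsilon>: "0 < \<epsilon>"
  have "g \<midarrow>x\<rightarrow> g x" using cont by (simp add: isCont_def)
  from LIM_D[OF this, of "\<epsilon>/2"] \<epsilon> obtain d where d: "0 < d"
    and dd: "\<And>y. y \<noteq> x \<and> norm (y - x) < d \<Longrightarrow> norm (g y - g x) < \<epsilon>/2" by auto
  have cont': "\<bar>g y - g x\<bar> \<le> \<epsilon>/2" if "\<bar>y - x\<bar> < d" for y
    using dd[of y] that \<epsilon> by (cases "y = x") auto
  have ev1: "eventually (\<lambda>k. \<bar>a k - x\<bar> < d/2) sequentially"
    using tendstoD[OF alim, of "d/2"] d by (simp add: dist_real_def)
  have lim2: "(\<lambda>k. 2 * B * (a k)\<^sup>2 / (d/2)\<^sup>2 * inverse (real (Suc k))) \<longlonglongrightarrow> 2 * B * x\<^sup>2 / (d/2)\<^sup>2 * 0"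
    by (intro tendsto_intros alim LIMSEQ_inverse_real_of_nat) (use d in simp)
  have ev2: "eventually (\<lambda>k. 2 * B * (a k)\<^sup>2 / (d/2)\<^sup>2 * inverse (real (Suc k)) < \<epsilon>/2) sequentially"
  proof -
    have "eventually (\<lambda>k. dist (2 * B * (a k)\<^sup>2 / (d/2)\<^sup>2 * inverse (real (Suc k))) 0 < \<epsilon>/2) sequentially"
      using tendstoD[OF lim2, of "\<epsilon>/2"] \<epsilon> by simp
    then show ?thesis by (rule eventually_mono) (simp only: dist_real_def abs_less_iff diff_0_right)
  qed
  show "eventually (\<lambda>k. dist (\<integral>y. g y \<partial>density lborel (erlang_density k (real (Suc k) / a k))) (g x) < \<epsilon>) sequentially"
    using ev1 ev2
  proof eventually_elim
    case (elim k)
    have "\<bar>(\<integral>y. g y \<partial>density lborel (erlang_density k (real (Suc k) / a k))) - g x\<bar>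
          \<le> \<epsilon>/2 + 2 * B * ((a k)\<^sup>2 / (real (Suc k) * (d/2)\<^sup>2))"
      by (rule erl_bound[OF apos gm gB d _ cont' elim(1)]) (use \<epsilon> in auto)
    also have "2 * B * ((a k)\<^sup>2 / (real (Suc k) * (d/2)\<^sup>2)) = 2 * B * (a k)\<^sup>2 / (d/2)\<^sup>2 * inverse (real (Suc k))"
      by (simp add: field_simps)
    finally show ?case using elim(2) by (simp add: dist_real_def)
  qed
qed

definition qx :: "nat \<Rightarrow> real \<Rightarrow> nat" where
  "qx m x = min (m*m - 1) (nat \<lceil>x * real m\<rceil> - 1)"
definition rn :: "nat \<Rightarrow> nat \<Rightarrow> nat" where
  "rn m n = (if 1 \<le> n \<and> n \<le> m then n - 1 else 0)"
definition phi :: "nat \<Rightarrow> real \<times> nat \<Rightarrow> nat" where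
  "phi m xn = m * qx m (fst xn) + rn m (snd xn)"

lemma rn_lt: "0 < m \<Longrightarrow> rn m n < m"
  by (auto simp: rn_def)

lemma phi_div: "0 < m \<Longrightarrow> phi m xn div m = qx m (fst xn)"
  using rn_lt[of m "snd xn"] by (simp add: phi_def)

lemma phi_mod: "0 < m \<Longrightarrow> phi m xn mod m = rn m (snd xn)"
  using rn_lt[of m "snd xn"] by (simp add: phi_def)

lemma phi_lt: assumes m: "0 < m" shows "phi m xn < m*m*m"
proof -
  have "1 \<le> m*m" using m by simp
  then have q: "qx m (fst xn) + 1 \<le> m*m" unfolding qx_def by linarith
  have "phi m xn < m * qx m (fst xn) + m" using rn_lt[OF m] by (simp add: phi_def)
  also have "... = m * (qx m (fst xn) + 1)" by simp
  also have "... \<le> m * (m*m)" using q by (intro mult_left_mono) auto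
  finally show ?thesis by (simp add: mult.assoc)
qed

lemma meas_phi: "phi m \<in> measurable (borel :: (real \<times> nat) measure) (count_space UNIV)"
proof -
  have sn: "(snd :: real \<times> nat \<Rightarrow> nat) \<in> measurable (borel \<Otimes>\<^sub>M borel) (count_space UNIV)"
    using measurable_snd[of "borel :: real measure" "borel :: nat measure"]
    by (simp add: measurable_cong_sets[OF refl sets_borel_eq_count_space])
  have fs: "(\<lambda>xn::real \<times> nat. \<lceil>fst xn * real m\<rceil>) \<in> measurable (borel \<Otimes>\<^sub>M borel) (count_space UNIV)"
    by measurable
  have "(\<lambda>xn::real\<times>nat. (\<lambda>i. m * min (m*m - 1) (nat i - 1) + rn m (snd xn)) \<lceil>fst xn * real m\<rceil> ) \<in> measurable (borel \<Otimes>\<^sub>M borel) (count_space UNIV)"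
    by (rule measurable_compose_countable'[OF _ fs]) (auto intro: measurable_compose[OF sn])
  then show ?thesis
    unfolding phi_def[abs_def] qx_def by (simp add: borel_prod)
qed

lemma hp_zpath: assumes m: "0 < m" and c: "c < m*m*m" and B: "B \<in> sets borel"
  shows "holding_prob (pp m) (Tm m) (zpath m c k) B = measure (H m c k) B"
proof (cases "k < m")
  case True
  have lt: "c*m + k < pp m" using cm_lt_pp[OF c True] .
  have "(c*m + k) div m = c" using True by simp
  then show ?thesis using True lt
    by (simp add: holding_prob_def zpath_def H_def jump_rate_Tm)
next
  case False
  then show ?thesis using B by (simp add: holding_prob_def zpath_def H_def measure_return)
qed

definition Eplus :: "nat \<Rightarrow> nat set" where
  "Eplus m = {s. s < pp m \<and> s mod m < nval m (s div m)}"

lemma sum_blocks: assumes m: "0 < m"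
  shows "(\<Sum>s<pp m. (if s mod m = 0 then w (s div m) else 0)) = (\<Sum>c<m*m*m. (w c :: real))"
proof -
  have "(\<Sum>s<pp m. (if s mod m = 0 then w (s div m) else 0)) =
        (\<Sum>c<m*m*m. \<Sum>s\<in>{c*m..<c*m+m}. (if s mod m = 0 then w (s div m) else 0))"
    by (simp add: sum.nat_group pp_def)
  also have "... = (\<Sum>c<m*m*m. w c)"
  proof (intro sum.cong refl)
    fix c
    have "(\<Sum>s\<in>{c*m..<c*m+m}. (if s mod m = 0 then w (s div m) else 0)) =
          (\<Sum>s\<in>{c*m..<c*m+m}. (if s = c*m then w c else 0))"
    proof (intro sum.cong refl)
      fix s assume s: "s \<in> {c*m..<c*m+m}"
      then obtain i where i: "s = c*m + i" "i < m" by (metis add_less_cancel_left atLeastLessThan_iff le_Suc_ex)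
      show "(if s mod m = 0 then w (s div m) else 0) = (if s = c*m then w c else 0)"
        using i by auto
    qed
    also have "... = w c" using m by simp
    finally show "(\<Sum>s\<in>{c*m..<c*m+m}. (if s mod m = 0 then w (s div m) else 0)) = w c" .
  qed
  finally show ?thesis .
qed

definition Zf :: "nat \<Rightarrow> (nat \<Rightarrow> nat) \<times> (nat \<Rightarrow> real) \<Rightarrow> nat" where "Zf k \<omega> = fst \<omega> k"
definition Sf :: "nat \<Rightarrow> (nat \<Rightarrow> nat) \<times> (nat \<Rightarrow> real) \<Rightarrow> real" where "Sf k \<omega> = snd \<omega> k"

definition Gm :: "nat \<Rightarrow> (nat \<Rightarrow> nat) \<times> (nat \<Rightarrow> real) \<Rightarrow> real \<times> nat" where
  "Gm m \<omega> = (absorption_time (pp m) Zf Sf \<omega>, visits_count (pp m) Zf (Eplus m) \<omega>)"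

lemma meas_card_prefix: "(\<lambda>\<omega>. card {k. k < i \<and> fst \<omega> k \<in> E}) \<in> measurable Sig (count_space UNIV)"
proof (induction i)
  case 0
  then show ?case by simp
next
  case (Suc i)
  have eq: "card {k. k < Suc i \<and> fst \<omega> k \<in> E} = card {k. k < i \<and> fst \<omega> k \<in> E} + (if fst \<omega> i \<in> E then 1 else 0)" for \<omega>
  proof (cases "fst \<omega> i \<in> E")
    case True
    have fin: "finite {k. k < i \<and> fst \<omega> k \<in> E}" by simp
    have "{k. k < Suc i \<and> fst \<omega> k \<in> E} = insert i {k. k < i \<and> fst \<omega> k \<in> E}"
      using True by (auto simp: less_Suc_eq)
    then show ?thesis using True card_insert_disjoint[OF fin, of i] by simp
  next
    case False
    have "{k. k < Suc i \<and> fst \<omega> k \<in> E} = {k. k < i \<and> fst \<omega> k \<in> E}"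
      using False by (auto simp: less_Suc_eq)
    then show ?thesis using False by simp
  qed
  have m0: "(\<lambda>\<omega>. fst \<omega> i) \<in> measurable Sig (count_space UNIV)"
    unfolding Sig_def by measurable
  have m1: "(\<lambda>\<omega>. fst \<omega> i \<in> E) \<in> measurable Sig (count_space UNIV)"
    by (rule measurable_compose[OF m0]) simp
  have mm: "(\<lambda>\<omega>. (\<lambda>j \<omega>. j + (if fst \<omega> i \<in> E then 1 else 0)) (card {k. k < i \<and> fst \<omega> k \<in> E}) \<omega>) \<in> measurable Sig (count_space UNIV)"
  proof (rule measurable_compose_countable'[OF _ Suc.IH])
    fix j :: nat
    show "(\<lambda>\<omega>. j + (if fst \<omega> i \<in> E then 1 else 0)) \<in> measurable Sig (count_space UNIV)"
      by (rule measurable_compose[OF m1, of "\<lambda>b. j + (if b then 1 else 0)"]) simp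
  qed auto
  have eqf: "(\<lambda>\<omega>. card {k. k < Suc i \<and> fst \<omega> k \<in> E}) = (\<lambda>\<omega>. card {k. k < i \<and> fst \<omega> k \<in> E} + (if fst \<omega> i \<in> E then 1 else 0))"
    by (rule ext) (rule eq)
  show ?case unfolding eqf by (rule mm)
qed

lemma meas_absidx: "(\<lambda>\<omega>. absorption_index p Zf \<omega>) \<in> measurable Sig (count_space UNIV)"
  unfolding absorption_index_def Zf_def Sig_def by measurable

lemma meas_Gm: "Gm m \<in> measurable Sig borel"
proof -
  have a: "(\<lambda>\<omega>. absorption_time (pp m) Zf Sf \<omega>) \<in> borel_measurable Sig"
  proof -
    have "(\<lambda>\<omega>. (\<lambda>i \<omega>. \<Sum>k<i. snd \<omega> k) (absorption_index (pp m) Zf \<omega>) \<omega>) \<in> borel_measurable Sig"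
    proof (rule measurable_compose_countable'[OF _ meas_absidx])
      fix i :: nat
      show "(\<lambda>\<omega>. \<Sum>k<i. snd \<omega> k) \<in> borel_measurable Sig" unfolding Sig_def by measurable
    qed auto
    then show ?thesis by (simp add: absorption_time_def Sf_def)
  qed
  have v: "(\<lambda>\<omega>. visits_count (pp m) Zf (Eplus m) \<omega>) \<in> measurable Sig (count_space UNIV)"
  proof -
    have "(\<lambda>\<omega>. (\<lambda>i \<omega>. card {k. k < i \<and> fst \<omega> k \<in> Eplus m}) (absorption_index (pp m) Zf \<omega>) \<omega>) \<in> measurable Sig (count_space UNIV)"
      by (rule measurable_compose_countable'[OF meas_card_prefix meas_absidx]) auto
    then show ?thesis by (simp add: visits_count_def Zf_def)
  qed
  have "Gm m \<in> measurable Sig (borel \<Otimes>\<^sub>M borel)"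
    unfolding Gm_def
    by (rule measurable_Pair[OF a]) (use v in \<open>simp add: measurable_cong_sets[OF refl sets_borel_eq_count_space]\<close>)
  then show ?thesis by (simp add: borel_prod)
qed

lemma absidx_zpath: assumes m: "0 < m" and c: "c < m*m*m"
  shows "absorption_index (pp m) Zf (zpath m c, h) = m"
proof -
  have "(LEAST k. zpath m c k = pp m) = m"
  proof (rule Least_equality)
    show "zpath m c m = pp m" by (simp add: zpath_def)
    fix k assume "zpath m c k = pp m"
    then show "m \<le> k" using cm_lt_pp[OF c, of k] by (auto simp: zpath_def split: if_splits)
  qed
  then show ?thesis by (simp add: absorption_index_def Zf_def)
qed

lemma Gm_zpath: assumes m: "0 < m" and c: "c < m*m*m"
  shows "Gm m (zpath m c, h) = ((\<Sum>k<m. h k), nval m c)"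
proof -
  have "{k. k < m \<and> zpath m c k \<in> Eplus m} = {k. k < nval m c}"
  proof -
    have "k < m \<and> zpath m c k \<in> Eplus m \<longleftrightarrow> k < nval m c" for k
    proof -
      have "nval m c \<le> m" using m by (simp add: nval_def Suc_leI)
      moreover have "k < m \<Longrightarrow> (c*m + k) mod m = k \<and> (c*m+k) div m = c" by simp
      ultimately show ?thesis using cm_lt_pp[OF c, of k] by (auto simp: zpath_def Eplus_def)
    qed
    then show ?thesis by auto
  qed
  then show ?thesis
    by (simp add: Gm_def absorption_time_def visits_count_def absidx_zpath[OF m c] Sf_def Zf_def)
qed

lemma distr_sum_H: assumes m: "0 < m"
  shows "distr (PiM UNIV (H m c)) lborel (\<lambda>h. \<Sum>k<m. h k) = density lborel (erlang_density (m - 1) (rt m c))"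
proof -
  interpret HH: prob_space "H m c i" for i using prob_space_H[OF m] .
  interpret P: product_prob_space "H m c" UNIV by unfold_locales
  have comp: "distr (PiM UNIV (H m c)) lborel (\<lambda>h. h i) = H m c i" for i
  proof -
    have "distr (PiM UNIV (H m c)) lborel (\<lambda>h. h i) = distr (PiM UNIV (H m c)) (H m c i) (\<lambda>h. h i)"
      by (rule distr_cong) (auto simp: sets_H)
    also have "... = H m c i"
      by (rule distr_PiM_component) (auto simp: prob_space_H[OF m])
    finally show ?thesis .
  qed
  have distr_i: "distributed (PiM UNIV (H m c)) lborel (\<lambda>h. h i) (exponential_density (rt m c))" if i: "i \<in> {..<m}" for i
    unfolding distributed_def
  proof (intro conjI)
    show "distr (PiM UNIV (H m c)) lborel (\<lambda>h. h i) = density lborel (\<lambda>x. ennreal (exponential_density (rt m c) x))"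
      using i by (simp add: comp H_def)
    show "(\<lambda>h. h i) \<in> PiM UNIV (H m c) \<rightarrow>\<^sub>M lborel"
      by (simp add: measurable_cong_sets[OF sets_PiM_H refl])
  qed simp
  have ind: "P.indep_vars (\<lambda>i. borel) (\<lambda>i h. h i) {..<m}"
  proof (subst P.indep_vars_iff_distr_eq_PiM')
    show "{..<m} \<noteq> {}" using m by auto
    fix i assume "i \<in> {..<m}"
    show "P.random_variable borel (\<lambda>h. h i)"
      by (subst measurable_cong_sets[OF sets_PiM_H refl]) (rule measurable_component_singleton, simp)
  next
    have "distr (PiM UNIV (H m c)) (PiM {..<m} (\<lambda>i. borel)) (\<lambda>x. \<lambda>i\<in>{..<m}. x i) =
          distr (PiM UNIV (H m c)) (PiM {..<m} (H m c)) (\<lambda>x. restrict x {..<m})"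
      by (rule distr_cong) (auto intro!: sets_PiM_cong simp: sets_H restrict_def)
    also have "... = PiM {..<m} (H m c)"
      by (rule P.distr_PiM_restrict_finite) auto
    also have "... = PiM {..<m} (\<lambda>i. distr (PiM UNIV (H m c)) borel (\<lambda>h. h i))"
    proof (rule PiM_cong[OF refl])
      fix i
      have "distr (PiM UNIV (H m c)) borel (\<lambda>h. h i) = distr (PiM UNIV (H m c)) lborel (\<lambda>h. h i)"
        by (rule distr_cong) auto
      then show "H m c i = distr (PiM UNIV (H m c)) borel (\<lambda>h. h i)" using comp by simp
    qed
    finally show "distr (PiM UNIV (H m c)) (PiM {..<m} (\<lambda>i. borel)) (\<lambda>x. \<lambda>i\<in>{..<m}. x i) =
          PiM {..<m} (\<lambda>i. distr (PiM UNIV (H m c)) borel (\<lambda>h. h i))" .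
  qed
  have "distributed (PiM UNIV (H m c)) lborel (\<lambda>x. \<Sum>i\<in>{..<m}. x i) (erlang_density (card {..<m} - 1) (rt m c))"
    by (rule P.exponential_distributed_sum[OF _ _ rt_pos[OF m] distr_i ind]) (use m in auto)
  then show ?thesis by (simp add: distributed_def)
qed

lemma integral_Mc: fixes f :: "real \<times> nat \<Rightarrow> real" assumes m: "0 < m" and c: "c < m*m*m" and f: "f \<in> borel_measurable (borel :: (real \<times> nat) measure)"
  shows "(\<integral>\<omega>. f (Gm m \<omega>) \<partial>Mc m c) = (\<integral>y. f (y, nval m c) \<partial>density lborel (erlang_density (m - 1) (rt m c)))"
proof -
  have fG: "(\<lambda>\<omega>. f (Gm m \<omega>)) \<in> borel_measurable Sig"
    by (rule measurable_compose[OF meas_Gm f])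
  have "(\<integral>\<omega>. f (Gm m \<omega>) \<partial>Mc m c) = (\<integral>h. f (Gm m (zpath m c, h)) \<partial>PiM UNIV (H m c))"
    unfolding Mc_def using meas_pair_zpath fG by (rule integral_distr[where f="\<lambda>\<omega>. f (Gm m \<omega>)" and g="\<lambda>h. (zpath m c, h)"])
  also have "... = (\<integral>h. f ((\<Sum>k<m. h k), nval m c) \<partial>PiM UNIV (H m c))"
    by (simp add: Gm_zpath[OF m c])
  also have "... = (\<integral>y. f (y, nval m c) \<partial>distr (PiM UNIV (H m c)) lborel (\<lambda>h. \<Sum>k<m. h k))"
  proof (rule integral_distr[symmetric])
    show "(\<lambda>h. \<Sum>k<m. h k) \<in> PiM UNIV (H m c) \<rightarrow>\<^sub>M lborel"
      by (simp add: measurable_cong_sets[OF sets_PiM_H refl])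
    show "(\<lambda>y. f (y, nval m c)) \<in> borel_measurable lborel"
      using f by measurable
  qed
  also have "... = (\<integral>y. f (y, nval m c) \<partial>density lborel (erlang_density (m - 1) (rt m c)))"
    by (simp add: distr_sum_H[OF m])
  finally show ?thesis .
qed

lemma aval_phi: "0 < m \<Longrightarrow> aval m (phi m (x, n)) = real (qx m x + 1) / real m"
  by (simp add: aval_def phi_div)

lemma nval_phi: "0 < m \<Longrightarrow> 1 \<le> n \<Longrightarrow> n \<le> m \<Longrightarrow> nval m (phi m (x, n)) = n"
  by (simp add: nval_def phi_mod rn_def)

lemma qx_bounds: assumes m: "0 < m" and x: "0 \<le> x" and xm1: "x + 1 \<le> real m"
  shows "x * real m \<le> real (qx m x + 1) \<and> real (qx m x + 1) \<le> x * real m + 1"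
proof -
  define c where "c = \<lceil>x * real m\<rceil>"
  have c1: "of_int c < x * real m + 1" and c2: "x * real m \<le> of_int c"
    using ceiling_correct[of "x * real m"] by (auto simp: c_def)
  have xm0: "0 \<le> x * real m" using x by simp
  have c0: "0 \<le> c" using c2 xm0 by linarith
  have "x * real m \<le> (real m - 1) * real m" using xm1 by (intro mult_right_mono) auto
  then have "of_int c < real m * real m" using c1 m by (simp add: algebra_simps)
  then have "c < int (m * m)" by (metis of_int_less_iff of_int_of_nat_eq of_nat_mult)
  then have "nat c - 1 \<le> m * m - 1" by linarith
  then have q: "qx m x = nat c - 1" by (simp add: qx_def c_def)
  show ?thesis
  proof (cases "c = 0")
    case True
    have "x * real m \<le> 0" using c2 True by simp
    then have "x * real m = 0" using xm0 by linarith
    then show ?thesis using q True by (simp only: ) simp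
  next
    case False
    then have "real (qx m x + 1) = of_int c" using q c0 by simp
    then show ?thesis using c1 c2 by simp
  qed
qed

lemma aval_conv: assumes x: "0 \<le> x"
  shows "(\<lambda>k. aval (Suc k) (phi (Suc k) (x, n))) \<longlonglongrightarrow> x"
proof (rule tendsto_sandwich[where f="\<lambda>_. x" and h="\<lambda>k. x + 1 / real (Suc k)"])
  have ev: "eventually (\<lambda>k. x + 1 \<le> real (Suc k)) sequentially"
  proof -
    obtain N :: nat where "x + 1 \<le> real N" using real_arch_simple by blast
    then show ?thesis unfolding eventually_sequentially by (intro exI[of _ N]) auto
  qed
  show "eventually (\<lambda>k. x \<le> aval (Suc k) (phi (Suc k) (x, n))) sequentially"
    using ev
  proof eventually_elim
    case (elim k)
    have "x * real (Suc k) \<le> real (qx (Suc k) x + 1)" using qx_bounds[OF _ x elim] by simp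
    then show ?case by (simp add: aval_phi field_simps del: of_nat_Suc)
  qed
  show "eventually (\<lambda>k. aval (Suc k) (phi (Suc k) (x, n)) \<le> x + 1 / real (Suc k)) sequentially"
    using ev
  proof eventually_elim
    case (elim k)
    have "real (qx (Suc k) x + 1) \<le> x * real (Suc k) + 1" using qx_bounds[OF _ x elim] by simp
    then show ?case by (simp add: aval_phi field_simps del: of_nat_Suc)
  qed
  show "(\<lambda>k. x + 1 / real (Suc k)) \<longlonglongrightarrow> x"
    using tendsto_add[OF tendsto_const LIMSEQ_inverse_real_of_nat, of x] by (simp add: inverse_eq_divide)
qed simp

lemma abs_integral_prob_le: assumes "prob_space P" and gm: "g \<in> borel_measurable P" and gB: "\<And>y. \<bar>g y\<bar> \<le> (B::real)"
  shows "\<bar>\<integral>y. g y \<partial>P\<bar> \<le> B"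
proof -
  interpret prob_space P by fact
  have ig: "integrable P g" by (rule integrable_const_bound[where B=B]) (auto simp: gB gm)
  have "\<bar>\<integral>y. g y \<partial>P\<bar> \<le> (\<integral>y. \<bar>g y\<bar> \<partial>P)"
    using integral_norm_bound[of P g] by simp
  also have "... \<le> (\<integral>y. B \<partial>P)"
    by (rule integral_mono) (auto simp: gB ig)
  finally show ?thesis by (simp add: prob_space)
qed

definition Erl :: "nat \<Rightarrow> nat \<Rightarrow> (real \<times> nat \<Rightarrow> real) \<Rightarrow> real" where
  "Erl m c f = (\<integral>y. f (y, nval m c) \<partial>density lborel (erlang_density (m - 1) (rt m c)))"

lemma Erl_bound: fixes f :: "real \<times> nat \<Rightarrow> real"
  assumes m: "0 < m" and fm: "f \<in> borel_measurable borel" and fB: "\<And>z. \<bar>f z\<bar> \<le> B"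
  shows "\<bar>Erl m c f\<bar> \<le> B"
proof -
  have gm: "(\<lambda>y. f (y, nval m c)) \<in> borel_measurable (density lborel (erlang_density (m - 1) (rt m c)))"
    using fm by measurable
  show ?thesis
    unfolding Erl_def
    by (rule abs_integral_prob_le[OF prob_space_erlang_density[OF rt_pos[OF m]] gm fB])
qed

context
  fixes F :: "(real \<times> nat) measure"
  assumes F: "prob_space F" and sF: "sets F = sets borel"
begin

lemma meas_phi_F: "phi m \<in> measurable F (count_space UNIV)"
  using meas_phi[of m] by (simp add: measurable_cong_sets[OF sF refl])

lemma kernel_meas: "0 < m \<Longrightarrow> (\<lambda>xn. Mc m (phi m xn)) \<in> measurable F (subprob_algebra Sig)"
  by (rule measurable_compose[OF meas_phi_F]) (auto simp: Mc_in_space)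

lemma spaceF: "space F \<noteq> {}"
  using F prob_space.not_empty by blast

definition MM :: "nat \<Rightarrow> ((nat \<Rightarrow> nat) \<times> (nat \<Rightarrow> real)) measure" where
  "MM m = F \<bind> (\<lambda>xn. Mc m (phi m xn))"

lemma sets_MM: "sets (MM m) = sets Sig"
  unfolding MM_def by (rule sets_bind[OF _ spaceF]) (simp add: sets_Mc)

lemma space_MM: "space (MM m) = UNIV"
  using sets_eq_imp_space_eq[OF sets_MM] by (simp add: space_Sig)

lemma prob_space_MM: "0 < m \<Longrightarrow> prob_space (MM m)"
  unfolding MM_def
  by (rule prob_space.prob_space_bind[OF F _ kernel_meas]) (auto simp: prob_space_Mc)

definition w :: "nat \<Rightarrow> nat \<Rightarrow> real" where
  "w m c = measure F {xn \<in> space F. phi m xn = c}"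

lemma integral_phi: assumes m: "0 < m"
  shows "(\<integral>xn. g (phi m xn) \<partial>F) = (\<Sum>c<m*m*m. (g c :: real) * w m c)"
proof -
  have sets: "{xn \<in> space F. phi m xn = c} \<in> sets F" for c
    using meas_phi_F[of m] by measurable
  interpret prob_space F by (rule F)
  have "(\<integral>xn. g (phi m xn) \<partial>F) = (\<integral>xn. (\<Sum>c<m*m*m. g c * indicator {xn \<in> space F. phi m xn = c} xn) \<partial>F)"
  proof (rule Bochner_Integration.integral_cong[OF refl])
    fix xn assume xn: "xn \<in> space F"
    have "(\<Sum>c<m*m*m. g c * indicator {xn \<in> space F. phi m xn = c} xn) = (\<Sum>c<m*m*m. if c = phi m xn then g c else 0)"
      using xn by (intro sum.cong) (auto simp: indicator_def)
    also have "... = g (phi m xn)" using phi_lt[OF m] by simp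
    finally show "g (phi m xn) = (\<Sum>c<m*m*m. g c * indicator {xn \<in> space F. phi m xn = c} xn)" by simp
  qed
  also have "... = (\<Sum>c<m*m*m. g c * w m c)"
    using sets by (subst Bochner_Integration.integral_sum) (auto simp: w_def emeasure_eq_measure intro!: integrable_mult_right integrable_real_indicator)
  finally show ?thesis .
qed

lemma sum_w: "0 < m \<Longrightarrow> (\<Sum>c<m*m*m. w m c) = 1"
  using integral_phi[of m "\<lambda>_. 1"] prob_space.prob_space[OF F] by simp

lemma w_nonneg: "0 \<le> w m c"
  by (simp add: w_def)

definition alpha :: "nat \<Rightarrow> real vec" where
  "alpha m = vec (pp m) (\<lambda>s. if s mod m = 0 then w m (s div m) else 0)"

lemma measure_MM_Ev: assumes m: "0 < m" and B: "\<forall>k\<le>n. B k \<in> sets borel"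
  shows "measure (MM m) (Ev n z B) = (\<Sum>c<m*m*m. (if \<forall>k\<le>n. zpath m c k = z k then (\<Prod>k\<le>n. measure (H m c k) (B k)) else 0) * w m c)"
proof -
  interpret prob_space F by (rule F)
  have "measure (MM m) (Ev n z B) = (\<integral>xn. measure (Mc m (phi m xn)) (Ev n z B) \<partial>F)"
    unfolding MM_def by (rule measure_bind[OF kernel_meas[OF m] Ev_sets[OF B]])
  also have "... = (\<integral>xn. (\<lambda>c. (if \<forall>k\<le>n. zpath m c k = z k then (\<Prod>k\<le>n. measure (H m c k) (B k)) else 0)) (phi m xn) \<partial>F)"
    by (simp add: measure_Mc_Ev[OF m B])
  also have "... = (\<Sum>c<m*m*m. (if \<forall>k\<le>n. zpath m c k = z k then (\<Prod>k\<le>n. measure (H m c k) (B k)) else 0) * w m c)"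
    by (rule integral_phi[OF m])
  finally show ?thesis .
qed

lemma alpha_nth: "s < pp m \<Longrightarrow> alpha m $ s = (if s mod m = 0 then w m (s div m) else 0)"
  by (simp add: alpha_def)

lemma markov_MM: assumes m: "0 < m"
  shows "markov_jump_process (MM m) (\<lambda>k \<omega>. fst \<omega> k) (\<lambda>k \<omega>. snd \<omega> k) (pp m) (Tm m) (alpha m)"
  unfolding markov_jump_process_def
proof (intro conjI allI impI)
  show "prob_space (MM m)" by (rule prob_space_MM[OF m])
  fix k
  show "(\<lambda>\<omega>. fst \<omega> k) \<in> MM m \<rightarrow>\<^sub>M count_space UNIV"
    unfolding measurable_cong_sets[OF sets_MM refl] Sig_def by measurable
  show "(\<lambda>\<omega>. snd \<omega> k) \<in> borel_measurable (MM m)"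
    unfolding measurable_cong_sets[OF sets_MM refl] Sig_def by measurable
next
  fix n z and B :: "nat \<Rightarrow> real set"
  assume B: "\<forall>k\<le>n. B k \<in> sets borel"
  have set_eq: "{\<omega> \<in> space (MM m). \<forall>k\<le>n. fst \<omega> k = z k \<and> snd \<omega> k \<in> B k} = Ev n z B"
    by (simp add: Ev_def space_MM space_Sig)
  define g where "g c = (if \<forall>k\<le>n. zpath m c k = z k then (\<Prod>k\<le>n. measure (H m c k) (B k)) else 0)" for c
  have lhs: "measure (MM m) {\<omega> \<in> space (MM m). \<forall>k\<le>n. fst \<omega> k = z k \<and> snd \<omega> k \<in> B k} = (\<Sum>c<m*m*m. g c * w m c)"
    unfolding set_eq g_def by (rule measure_MM_Ev[OF m B])
  have z0c: "zpath m c 0 = c * m" for c using m by (simp add: zpath_def)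
  show "measure (MM m) {\<omega> \<in> space (MM m). \<forall>k\<le>n. fst \<omega> k = z k \<and> snd \<omega> k \<in> B k} =
       (if z 0 < pp m then alpha m $ z 0 else 0) * (\<Prod>k<n. jump_prob (pp m) (Tm m) (z k) (z (Suc k))) *
       (\<Prod>k\<le>n. holding_prob (pp m) (Tm m) (z k) (B k))"
  proof (cases "z 0 < pp m \<and> z 0 mod m = 0")
    case False
    have "g c = 0" if c: "c < m*m*m" for c
    proof -
      have "z 0 \<noteq> c * m" using False cm_lt_pp[OF c m] by auto
      then show ?thesis using z0c[of c] by (auto simp: g_def)
    qed
    then have "(\<Sum>c<m*m*m. g c * w m c) = 0" by simp
    moreover have "(if z 0 < pp m then alpha m $ z 0 else 0) = 0"
      using False by (auto simp: alpha_nth)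
    ultimately show ?thesis using lhs by simp
  next
    case True
    define c0 where "c0 = z 0 div m"
    have z0: "z 0 = c0 * m" using True by (metis add.right_neutral c0_def div_mult_mod_eq)
    have c0: "c0 < m*m*m" using True m by (simp add: c0_def pp_def less_mult_imp_div_less)
    have "(\<Sum>c<m*m*m. g c * w m c) = g c0 * w m c0 + (\<Sum>c\<in>{..<m*m*m} - {c0}. g c * w m c)"
      using c0 by (simp add: sum.remove)
    also have "(\<Sum>c\<in>{..<m*m*m} - {c0}. g c * w m c) = 0"
    proof (rule sum.neutral, intro ballI)
      fix c assume "c \<in> {..<m*m*m} - {c0}"
      then have "c \<noteq> c0" by auto
      then have "c * m \<noteq> c0 * m" using m by simp
      then show "g c * w m c = 0" using z0 z0c[of c] by (auto simp: g_def)
    qed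
    finally have L: "(\<Sum>c<m*m*m. g c * w m c) = g c0 * w m c0" by simp
    have A: "(if z 0 < pp m then alpha m $ z 0 else 0) = w m c0"
      using True by (simp add: alpha_nth c0_def)
    have J: "(\<Prod>k<n. jump_prob (pp m) (Tm m) (z k) (z (Suc k))) = (if \<forall>k\<le>n. z k = zpath m c0 k then 1 else 0)"
      by (rule prod_jp[where z=z, OF m c0 z0])
    show ?thesis
    proof (cases "\<forall>k\<le>n. z k = zpath m c0 k")
      case match: True
      have "(\<Prod>k\<le>n. holding_prob (pp m) (Tm m) (z k) (B k)) = (\<Prod>k\<le>n. measure (H m c0 k) (B k))"
        using match B by (intro prod.cong refl) (simp add: hp_zpath[OF m c0])
      moreover have "g c0 = (\<Prod>k\<le>n. measure (H m c0 k) (B k))" using match by (auto simp: g_def)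
      ultimately show ?thesis using lhs L A J match by simp
    next
      case nomatch: False
      then have "g c0 = 0" by (auto simp: g_def)
      then show ?thesis using lhs L A J nomatch by simp
    qed
  qed
qed


definition mu :: "nat \<Rightarrow> (real \<times> nat) measure" where
  "mu m = distr (MM m) borel (Gm m)"

lemma MMPH_mu: assumes m: "0 < m" shows "MMPH_star (mu m)"
  unfolding MMPH_star_def
proof (intro exI conjI)
  show "0 < pp m" using m by (simp add: pp_def)
  show "sub_intensity_matrix (pp m) (Tm m)" by (rule sub_intensity_Tm[OF m])
  show "alpha m \<in> carrier_vec (pp m)" by (simp add: alpha_def)
  show "\<forall>i<pp m. 0 \<le> alpha m $ i" by (simp add: alpha_nth w_nonneg)
  have "(\<Sum>i<pp m. alpha m $ i) = (\<Sum>s<pp m. (if s mod m = 0 then w m (s div m) else 0))"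
    by (intro sum.cong) (auto simp: alpha_nth)
  also have "... = (\<Sum>c<m*m*m. w m c)" by (rule sum_blocks[OF m])
  also have "... = 1" by (rule sum_w[OF m])
  finally show "(\<Sum>i<pp m. alpha m $ i) = 1" .
  show "Eplus m \<subseteq> {..<pp m}" by (auto simp: Eplus_def)
  show "\<forall>i<pp m. i \<notin> Eplus m \<longrightarrow> alpha m $ i = 0"
    by (auto simp: alpha_nth Eplus_def nval_def)
  show "markov_jump_process (MM m) Zf Sf (pp m) (Tm m) (alpha m)"
    using markov_MM[OF m] by (simp add: Zf_def[abs_def] Sf_def[abs_def])
  show "mu m = distr (MM m) borel (\<lambda>\<omega>. (absorption_time (pp m) Zf Sf \<omega>, visits_count (pp m) Zf (Eplus m) \<omega>))"
    by (simp add: mu_def Gm_def[abs_def])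
qed

lemma integral_mu: fixes f :: "real \<times> nat \<Rightarrow> real"
  assumes m: "0 < m" and fm: "f \<in> borel_measurable borel" and fB: "\<And>z. \<bar>f z\<bar> \<le> B"
  shows "integral\<^sup>L (mu m) f = (\<integral>xn. Erl m (phi m xn) f \<partial>F)"
proof -
  have G: "Gm m \<in> measurable (MM m) borel"
    using meas_Gm[of m] by (simp add: measurable_cong_sets[OF sets_MM refl])
  have fG: "(\<lambda>\<omega>. f (Gm m \<omega>)) \<in> borel_measurable Sig"
    by (rule measurable_compose[OF meas_Gm fm])
  have "integral\<^sup>L (mu m) f = (\<integral>\<omega>. f (Gm m \<omega>) \<partial>MM m)"
    unfolding mu_def using G fm by (rule integral_distr)
  also have "... = (\<integral>xn. (\<integral>\<omega>. f (Gm m \<omega>) \<partial>Mc m (phi m xn)) \<partial>F)"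
    unfolding MM_def
  proof (rule integral_bind[OF fG _ kernel_meas[OF m]])
    show "\<And>x. \<bar>f (Gm m x)\<bar> \<le> B" using fB by simp
    show "finite_measure F" using F by (simp add: prob_space_def)
    show "AE x in F. emeasure (Mc m (phi m x)) (space (Mc m (phi m x))) \<le> ennreal 1"
      using prob_space_Mc[OF m] by (simp add: prob_space.emeasure_space_1)
  qed
  also have "... = (\<integral>xn. Erl m (phi m xn) f \<partial>F)"
    by (intro Bochner_Integration.integral_cong refl) (simp add: Erl_def integral_Mc[OF m phi_lt[OF m] fm])
  finally show ?thesis .
qed

end


theorem mainTheorem1:
  fixes F :: "(real \<times> nat) measure"
  assumes "prob_space F"
    and "sets F = sets borel"
    and "measure F ({0..} \<times> {1..}) = 1"
  shows "\<exists>\<mu> :: nat \<Rightarrow> (real \<times> nat) measure. (\<forall>n. MMPH_star (\<mu> n)) \<and> weak_conv_prod \<mu> F"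
proof (intro exI[of _ "\<lambda>n. mu F (Suc n)"] conjI allI)
  note F = assms(1) and sF = assms(2)
  interpret prob_space F by (rule F)
  fix n
  show "MMPH_star (mu F (Suc n))" by (rule MMPH_mu[OF F sF]) simp
next
  note F = assms(1) and sF = assms(2)
  interpret prob_space F by (rule F)
  show "weak_conv_prod (\<lambda>n. mu F (Suc n)) F"
    unfolding weak_conv_prod_def
  proof (intro allI impI, elim conjE)
    fix f :: "real \<times> nat \<Rightarrow> real"
    assume cont: "continuous_on UNIV f" and bnd: "bounded (range f)"
    obtain B where fB0: "\<And>z. norm (f z) \<le> B" using bnd unfolding bounded_iff by auto
    have fB: "\<And>z. \<bar>f z\<bar> \<le> B" using fB0 by simp
    have fm: "f \<in> borel_measurable borel" by (rule borel_measurable_continuous_onI[OF cont])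
    have eqI: "integral\<^sup>L (mu F (Suc k)) f = (\<integral>xn. Erl (Suc k) (phi (Suc k) xn) f \<partial>F)" for k
      by (rule integral_mu[OF F sF _ fm fB]) simp
    have "(\<lambda>k. \<integral>xn. Erl (Suc k) (phi (Suc k) xn) f \<partial>F) \<longlonglongrightarrow> integral\<^sup>L F f"
    proof (rule integral_dominated_convergence[where w="\<lambda>_. B"])
      show "f \<in> borel_measurable F" using fm by (simp add: measurable_cong_sets[OF sF refl])
      fix k
      show "(\<lambda>xn. Erl (Suc k) (phi (Suc k) xn) f) \<in> borel_measurable F"
        by (rule measurable_compose[OF meas_phi_F[OF F sF]]) simp
      show "integrable F (\<lambda>_. B)" by simp
      show "AE xn in F. norm (Erl (Suc k) (phi (Suc k) xn) f) \<le> B"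
        by (intro AE_I2) (simp add: Erl_bound[OF _ fm fB])
    next
      have "AE xn in F. xn \<in> {0..} \<times> {1..}"
        by (rule AE_prob_1) (use assms(3) in simp)
      then show "AE xn in F. (\<lambda>k. Erl (Suc k) (phi (Suc k) xn) f) \<longlonglongrightarrow> f xn"
      proof (rule AE_mp, intro AE_I2 impI)
        fix xn :: "real \<times> nat" assume xn: "xn \<in> {0..} \<times> {1..}"
        obtain x n where xn_eq: "xn = (x, n)" by (cases xn)
        have x: "0 \<le> x" and n: "1 \<le> n" using xn xn_eq by auto
        define a where "a k = aval (Suc k) (phi (Suc k) (x, n))" for k
        have apos: "0 < a k" for k by (simp add: a_def aval_def)
        have alim: "a \<longlonglongrightarrow> x" unfolding a_def by (rule aval_conv[OF x])
        have contg: "continuous_on UNIV (\<lambda>y. f (y, n))"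
          by (rule continuous_on_compose2[OF cont]) (auto intro!: continuous_intros)
        have gm: "(\<lambda>y. f (y, n)) \<in> borel_measurable borel" by (rule borel_measurable_continuous_onI[OF contg])
        have isc: "isCont (\<lambda>y. f (y, n)) x" using contg by (simp add: continuous_on_eq_continuous_at)
        have lim: "(\<lambda>k. \<integral>y. f (y, n) \<partial>density lborel (erlang_density k (real (Suc k) / a k))) \<longlonglongrightarrow> f (x, n)"
          by (rule erl_conv[OF gm _ isc apos alim]) (rule fB)
        have ev: "eventually (\<lambda>k. (\<integral>y. f (y, n) \<partial>density lborel (erlang_density k (real (Suc k) / a k)))
                     = Erl (Suc k) (phi (Suc k) xn) f) sequentially"
          unfolding eventually_sequentially
        proof (intro exI[of _ n] allI impI)
          fix k assume "n \<le> k"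
          then have "nval (Suc k) (phi (Suc k) (x, n)) = n" using n by (intro nval_phi) auto
          then show "(\<integral>y. f (y, n) \<partial>density lborel (erlang_density k (real (Suc k) / a k))) = Erl (Suc k) (phi (Suc k) xn) f"
            by (simp add: Erl_def xn_eq a_def rt_def)
        qed
        show "(\<lambda>k. Erl (Suc k) (phi (Suc k) xn) f) \<longlonglongrightarrow> f xn"
          using tendsto_cong[OF ev] lim by (simp add: xn_eq)
      qed
    qed
    then show "(\<lambda>k. integral\<^sup>L (mu F (Suc k)) f) \<longlonglongrightarrow> integral\<^sup>L F f"
      by (simp add: eqI)
  qed
qed

end
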